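(* Let $G$ be a graph with $\operatorname{diam}(\overline{G})=2$. Then $\gamma(G)=2$ if and only if $pav(\overline{G},0)>0$.
   Context: All graphs are finite, simple and undirected; $\overline{G}$ is the complement, $\operatorname{diam}$ the diameter and $\gamma$ the domination number. For a graph $F$ and integer $i\ge 0$, $pav(F,i)$ is the number of pairs of adjacent vertices of $F$ joined by exactly $i$ paths of length two (equivalently, having exactly $i$ common neighbours). *)

theory Defs
  imports Main "HOL-Library.Extended_Nat"
begin

definition graph :: "'a set \<Rightarrow> ('a \<Rightarrow> 'a \<Rightarrow> bool) \<Rightarrow> bool" where
  "graph V E \<longleftrightarrow> finite V \<and> (\<forall>x y. E x y \<longrightarrow> x \<in> V \<and> y \<in> V \<and> x \<noteq> y \<and> E y x)"

definition compl_graph :: "'a set \<Rightarrow> ('a \<Rightarrow> 'a \<Rightarrow> bool) \<Rightarrow> 'a \<Rightarrow> 'a \<Rightarrow> bool" where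
  "compl_graph V E = (\<lambda>x y. x \<in> V \<and> y \<in> V \<and> x \<noteq> y \<and> \<not> E x y)"

definition gdist :: "'a set \<Rightarrow> ('a \<Rightarrow> 'a \<Rightarrow> bool) \<Rightarrow> 'a \<Rightarrow> 'a \<Rightarrow> enat" where
  "gdist V E u v =
     (if \<exists>n. ((\<lambda>x y. x \<in> V \<and> y \<in> V \<and> E x y) ^^ n) u v
      then enat (LEAST n. ((\<lambda>x y. x \<in> V \<and> y \<in> V \<and> E x y) ^^ n) u v)
      else \<infinity>)"

definition diam :: "'a set \<Rightarrow> ('a \<Rightarrow> 'a \<Rightarrow> bool) \<Rightarrow> enat" where
  "diam V E = Sup ((\<lambda>(u, v). gdist V E u v) ` (V \<times> V))"

definition dominating :: "'a set \<Rightarrow> ('a \<Rightarrow> 'a \<Rightarrow> bool) \<Rightarrow> 'a set \<Rightarrow> bool" where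
  "dominating V E D \<longleftrightarrow> D \<subseteq> V \<and> (\<forall>v\<in>V. v \<in> D \<or> (\<exists>u\<in>D. E u v))"

definition domination_number :: "'a set \<Rightarrow> ('a \<Rightarrow> 'a \<Rightarrow> bool) \<Rightarrow> nat" where
  "domination_number V E = (LEAST k. \<exists>D. dominating V E D \<and> card D = k)"

definition pav :: "'a set \<Rightarrow> ('a \<Rightarrow> 'a \<Rightarrow> bool) \<Rightarrow> nat \<Rightarrow> nat" where
  "pav V E i = card {{u, v} | u v. E u v \<and> card {w \<in> V. E u w \<and> E v w} = i}"

end

theory Submission
  imports Defs
begin

lemma dist_le2:
  assumes g: "graph V E" and d: "diam V (compl_graph V E) = 2"
    and u: "u \<in> V" and v: "v \<in> V" and uv: "u \<noteq> v"
  shows "compl_graph V E u v \<or> (\<exists>w. compl_graph V E u w \<and> compl_graph V E w v)"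
proof -
  let ?H = "compl_graph V E"
  let ?R = "\<lambda>x y. x \<in> V \<and> y \<in> V \<and> ?H x y"
  have "gdist V ?H u v \<le> diam V ?H"
    unfolding diam_def by (rule Sup_upper) (use u v in auto)
  hence le: "gdist V ?H u v \<le> 2" using d by simp
  have ex: "\<exists>n. (?R ^^ n) u v"
  proof (rule ccontr)
    assume "\<not> ?thesis"
    hence "gdist V ?H u v = \<infinity>" unfolding gdist_def by simp
    with le show False by simp
  qed
  define n where "n = (LEAST n. (?R ^^ n) u v)"
  have Rn: "(?R ^^ n) u v" unfolding n_def by (rule LeastI_ex[OF ex])
  have "gdist V ?H u v = enat n" unfolding gdist_def n_def using ex by simp
  with le have "n \<le> 2" by (simp add: numeral_eq_enat)
  hence "n = 0 \<or> n = 1 \<or> n = 2" by auto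
  thus ?thesis
  proof (elim disjE)
    assume "n = 0" with Rn uv show ?thesis by simp
  next
    assume "n = 1" with Rn show ?thesis by (auto simp: relcompp.simps)
  next
    assume "n = 2" with Rn show ?thesis by (auto simp: numeral_2_eq_2 relcompp.simps)
  qed
qed

lemma has_nbr:
  assumes g: "graph V E" and d: "diam V (compl_graph V E) = 2" and a: "a \<in> V"
  shows "\<exists>b. compl_graph V E a b"
proof -
  have "\<exists>b\<in>V. b \<noteq> a"
  proof (rule ccontr)
    assume "\<not> ?thesis"
    hence "V = {a}" using a by blast
    hence "diam V (compl_graph V E) = gdist V (compl_graph V E) a a"
      unfolding diam_def by simp
    also have "\<dots> = 0"
    proof -
      let ?R = "\<lambda>x y. x \<in> V \<and> y \<in> V \<and> compl_graph V E x y"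
      have e: "\<exists>n. (?R ^^ n) a a" by (rule exI[of _ 0]) simp
      have l: "(LEAST n. (?R ^^ n) a a) = 0" by (rule Least_eq_0) simp
      show ?thesis unfolding gdist_def using e l by (simp add: zero_enat_def)
    qed
    finally show False using d by simp
  qed
  then obtain b where b: "b \<in> V" "b \<noteq> a" by blast
  from dist_le2[OF g d a b(1)] b(2) show ?thesis by blast
qed

lemma V_ne:
  assumes d: "diam V (compl_graph V E) = 2"
  shows "V \<noteq> {}"
  using d unfolding diam_def by (auto simp: bot_enat_def)

theorem lemma9:
  fixes V :: "'a set" and E :: "'a \<Rightarrow> 'a \<Rightarrow> bool"
  assumes "graph V E"
    and "diam V (compl_graph V E) = 2"
  shows "domination_number V E = 2 \<longleftrightarrow> pav V (compl_graph V E) 0 > 0"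
proof -
  let ?H = "compl_graph V E"
  have fin: "finite V" using assms(1) unfolding graph_def by simp
  have Esym: "\<And>x y. E x y \<Longrightarrow> x \<in> V \<and> y \<in> V \<and> x \<noteq> y \<and> E y x"
    using assms(1) unfolding graph_def by blast
  have Hsym: "compl_graph V E y x" if "compl_graph V E x y" for x y
    using that Esym unfolding compl_graph_def by blast
  have domV: "dominating V E V" unfolding dominating_def by auto
  have no_small: "\<not> dominating V E D" if "card D < 2" for D
  proof
    assume dD: "dominating V E D"
    have fD: "finite D" using dD fin unfolding dominating_def by (meson finite_subset)
    from that have "card D = 0 \<or> card D = 1" by auto
    thus False
    proof
      assume "card D = 0"
      hence "D = {}" using fD by simp
      with dD V_ne[OF assms(2)] show False unfolding dominating_def by auto
    next
      assume "card D = 1"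
      then obtain a where Da: "D = {a}" by (metis card_1_singletonE)
      hence aV: "a \<in> V" using dD unfolding dominating_def by auto
      obtain b where "?H a b" using has_nbr[OF assms(1,2) aV] by blast
      hence "b \<in> V" "b \<noteq> a" "\<not> E a b" unfolding compl_graph_def by auto
      with dD Da show False unfolding dominating_def by auto
    qed
  qed
  have dn_iff: "domination_number V E = 2 \<longleftrightarrow> (\<exists>D. dominating V E D \<and> card D = 2)"
  proof
    assume h: "domination_number V E = 2"
    have "\<exists>D. dominating V E D \<and> card D = domination_number V E"
      unfolding domination_number_def by (rule LeastI_ex) (use domV in blast)
    with h show "\<exists>D. dominating V E D \<and> card D = 2" by simp
  next
    assume h: "\<exists>D. dominating V E D \<and> card D = 2"
    show "domination_number V E = 2" unfolding domination_number_def
    proof (rule Least_equality)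
      show "\<exists>D. dominating V E D \<and> card D = 2" by fact
    next
      fix y assume "\<exists>D. dominating V E D \<and> card D = y"
      then obtain D where "dominating V E D" "card D = y" by blast
      with no_small[of D] show "2 \<le> y" by linarith
    qed
  qed
  let ?S = "{{u, v} | u v. ?H u v \<and> card {w \<in> V. ?H u w \<and> ?H v w} = 0}"
  have finS: "finite ?S"
    by (rule finite_subset[of _ "Pow V"]) (auto simp: compl_graph_def fin)
  have cnt0: "card {w \<in> V. ?H u w \<and> ?H v w} = 0 \<longleftrightarrow> (\<forall>w. \<not> (?H u w \<and> ?H v w))" for u v
    using fin by (auto simp: compl_graph_def)
  have pav_iff: "pav V ?H 0 > 0 \<longleftrightarrow> (\<exists>u v. ?H u v \<and> (\<forall>w. \<not> (?H u w \<and> ?H v w)))"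
  proof -
    have "pav V ?H 0 > 0 \<longleftrightarrow> ?S \<noteq> {}" unfolding pav_def using finS card_gt_0_iff by blast
    also have "\<dots> \<longleftrightarrow> (\<exists>u v. ?H u v \<and> (\<forall>w. \<not> (?H u w \<and> ?H v w)))"
      using cnt0 by blast
    finally show ?thesis .
  qed
  have dom2: "dominating V E {a, b} \<longleftrightarrow> (\<forall>w. \<not> (?H a w \<and> ?H b w))"
    if "a \<in> V" "b \<in> V" "a \<noteq> b" for a b
    using that unfolding dominating_def compl_graph_def by auto
  show ?thesis
  proof -
    have "(\<exists>D. dominating V E D \<and> card D = 2) \<longleftrightarrow> (\<exists>u v. ?H u v \<and> (\<forall>w. \<not> (?H u w \<and> ?H v w)))"
    proof
      assume "\<exists>D. dominating V E D \<and> card D = 2"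
      then obtain D where D: "dominating V E D" "card D = 2" by blast
      then obtain a b where ab: "D = {a, b}" "a \<noteq> b" by (meson card_2_iff)
      hence abV: "a \<in> V" "b \<in> V" using D(1) unfolding dominating_def by auto
      have nc: "\<forall>w. \<not> (?H a w \<and> ?H b w)" using dom2[OF abV ab(2)] D(1) ab(1) by simp
      have "?H a b" using dist_le2[OF assms(1,2) abV ab(2)] nc
        using Hsym by blast
      with nc show "\<exists>u v. ?H u v \<and> (\<forall>w. \<not> (?H u w \<and> ?H v w))" by blast
    next
      assume "\<exists>u v. ?H u v \<and> (\<forall>w. \<not> (?H u w \<and> ?H v w))"
      then obtain a b where h: "?H a b" "\<forall>w. \<not> (?H a w \<and> ?H b w)" by blast
      hence abV: "a \<in> V" "b \<in> V" "a \<noteq> b" unfolding compl_graph_def by auto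
      have "dominating V E {a, b}" using dom2[OF abV] h(2) by simp
      moreover have "card {a, b} = 2" using abV(3) by simp
      ultimately show "\<exists>D. dominating V E D \<and> card D = 2" by blast
    qed
    thus ?thesis using dn_iff pav_iff by simp
  qed
qed

end
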